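(* Let $\mu,\delta>0$. Then (a) $xy\le x\exp\big(x^\delta/\mu^\delta\big)+\mu\,y(\ln(1+y))^{1/\delta}$ for all $x,y\ge0$; (b) $xy\le x\exp\big((\ln(1+x))^\delta/\mu^\delta\big)+y\exp\big(\mu(\ln(1+y))^{1/\delta}\big)$ for all $x,y\ge0$. Furthermore, for each $q>1$ and $\varepsilon>0$ there is a constant $C_{q,\varepsilon,\mu,\delta}>0$ depending only on $(q,\varepsilon,\mu,\delta)$ such that (c) $xy\le\varepsilon\exp\big(qx^\delta/\mu^\delta\big)+\mu\,y(\ln(1+y))^{1/\delta}+C_{q,\varepsilon,\mu,\delta}$ for all $x,y\ge0$, and (d) in the case $\delta>1$, $xy\le\varepsilon\exp\big(q(\ln(1+x))^\delta/\mu^\delta\big)+y\exp\big(\mu(\ln(1+y))^{1/\delta}\big)+C_{q,\varepsilon,\mu,\delta}$ for all $x,y\ge0$. In particular, (e) $xy\le\mu\exp(x/\mu)+\mu\,y\ln(1+y)$ for all $x,y\ge0$; (f) for each $q>1$ there is a constant $\bar C_{\mu,q}>0$ depending only on $(\mu,q)$ such that $y e^{x}\le\bar C_{\mu,q}\exp\big(qx^2/\mu^2\big)+y\exp\big(\mu\sqrt{\ln(1+y)}\big)$ for all $x,y\ge0$. In addition, (g) for $\delta>1$, $xy\le\mu x^\delta+\mu^{-\frac{1}{\delta-1}}y^{\delta^*}$ for all $x,y\ge0$, where $\delta^*:=\delta/(\delta-1)$. *)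

theory Defs
  imports Complex_Main
begin

end

theory Submission
  imports Defs "HOL-Analysis.Convex" "HOL-Real_Asymp.Real_Asymp"
begin

lemma coreA:
  fixes \<mu> \<delta> x y :: real
  assumes "\<mu> > 0" "\<delta> > 0" "x \<ge> 0" "y \<ge> 0"
  shows "x * y \<le> x * exp (x powr \<delta> / \<mu> powr \<delta>) \<or> x * y \<le> \<mu> * y * (ln (1 + y)) powr (1 / \<delta>)"
proof (cases "y \<le> exp (x powr \<delta> / \<mu> powr \<delta>)")
  case True
  then show ?thesis using assms by (simp add: mult_left_mono)
next
  case False
  have y0: "y > 0" using False by (smt (verit) exp_gt_zero)
  have t: "x powr \<delta> / \<mu> powr \<delta> = (x / \<mu>) powr \<delta>" using assms by (simp add: powr_divide)
  have "ln y > (x / \<mu>) powr \<delta>" using False t y0 by (metis exp_less_cancel_iff exp_ln not_le)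
  then have "((x / \<mu>) powr \<delta>) powr (1/\<delta>) < (ln y) powr (1/\<delta>)"
    using assms by (intro powr_less_mono2) auto
  moreover have "((x / \<mu>) powr \<delta>) powr (1/\<delta>) = x / \<mu>" using assms by (simp add: powr_powr)
  moreover have "(ln y) powr (1/\<delta>) \<le> (ln (1+y)) powr (1/\<delta>)"
  proof -
    have "ln y > 0" by (rule le_less_trans[OF powr_ge_zero \<open>ln y > _\<close>])
    then have "y > 1" using y0 ln_gt_zero_iff by blast
    then show ?thesis using assms by (intro powr_mono2) simp_all
  qed
  ultimately have "x / \<mu> \<le> (ln (1+y)) powr (1/\<delta>)" by linarith
  then have "x \<le> \<mu> * (ln (1+y)) powr (1/\<delta>)" using assms by (simp add: field_simps)
  then have "x * y \<le> \<mu> * (ln (1+y)) powr (1/\<delta>) * y" using assms by (simp add: mult_right_mono)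
  then show ?thesis by (simp add: algebra_simps)
qed

lemma coreB:
  fixes \<mu> \<delta> x y :: real
  assumes "\<mu> > 0" "\<delta> > 0" "x \<ge> 0" "y \<ge> 0"
  shows "x * y \<le> x * exp ((ln (1 + x)) powr \<delta> / \<mu> powr \<delta>) \<or> x * y \<le> y * exp (\<mu> * (ln (1 + y)) powr (1 / \<delta>))"
proof (cases "y \<le> exp ((ln (1 + x)) powr \<delta> / \<mu> powr \<delta>)")
  case True
  then show ?thesis using assms by (simp add: mult_left_mono)
next
  case False
  have y0: "y > 0" using False by (smt (verit) exp_gt_zero)
  have l0: "ln (1+x) \<ge> 0" using assms by simp
  have t: "(ln (1 + x)) powr \<delta> / \<mu> powr \<delta> = (ln (1+x) / \<mu>) powr \<delta>" using assms l0 by (simp add: powr_divide)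
  have "ln y > (ln (1+x) / \<mu>) powr \<delta>" using False t y0 by (metis exp_less_cancel_iff exp_ln not_le)
  then have "((ln (1+x) / \<mu>) powr \<delta>) powr (1/\<delta>) < (ln y) powr (1/\<delta>)"
    using assms by (intro powr_less_mono2) auto
  moreover have "((ln (1+x) / \<mu>) powr \<delta>) powr (1/\<delta>) = ln (1+x) / \<mu>" using assms l0 by (simp add: powr_powr)
  moreover have "(ln y) powr (1/\<delta>) \<le> (ln (1+y)) powr (1/\<delta>)"
  proof -
    have "ln y > 0" by (rule le_less_trans[OF powr_ge_zero \<open>ln y > _\<close>])
    then have "y > 1" using y0 ln_gt_zero_iff by blast
    then show ?thesis using assms by (intro powr_mono2) simp_all
  qed
  ultimately have "ln (1+x) / \<mu> \<le> (ln (1+y)) powr (1/\<delta>)" by linarith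
  then have "ln (1+x) \<le> \<mu> * (ln (1+y)) powr (1/\<delta>)" using assms by (simp add: field_simps)
  then have "exp (ln (1 + x)) \<le> exp (\<mu> * (ln (1+y)) powr (1/\<delta>))" by simp
  then have "1 + x \<le> exp (\<mu> * (ln (1+y)) powr (1/\<delta>))" using assms by simp
  then have "x \<le> exp (\<mu> * (ln (1+y)) powr (1/\<delta>))" by linarith
  then have "x * y \<le> exp (\<mu> * (ln (1+y)) powr (1/\<delta>)) * y" using assms by (simp add: mult_right_mono)
  then show ?thesis by (simp add: algebra_simps)
qed

lemma partA:
  fixes \<mu> \<delta> x y :: real
  assumes "\<mu> > 0" "\<delta> > 0" "x \<ge> 0" "y \<ge> 0"
  shows "x * y \<le> x * exp (x powr \<delta> / \<mu> powr \<delta>) + \<mu> * y * (ln (1 + y)) powr (1 / \<delta>)"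
  using coreA[OF assms] assms by (smt (verit) mult_nonneg_nonneg exp_ge_zero powr_ge_zero)

lemma partB:
  fixes \<mu> \<delta> x y :: real
  assumes "\<mu> > 0" "\<delta> > 0" "x \<ge> 0" "y \<ge> 0"
  shows "x * y \<le> x * exp ((ln (1 + x)) powr \<delta> / \<mu> powr \<delta>) + y * exp (\<mu> * (ln (1 + y)) powr (1 / \<delta>))"
  using coreB[OF assms] assms by (smt (verit) mult_nonneg_nonneg exp_ge_zero)


lemma bound_from_eventually:
  fixes f g :: "real \<Rightarrow> real"
  assumes ev: "eventually (\<lambda>x. f x \<le> g x) at_top"
    and mono: "\<And>x y. 0 \<le> x \<Longrightarrow> x \<le> y \<Longrightarrow> f x \<le> f y"
    and gnn: "\<And>x. 0 \<le> x \<Longrightarrow> 0 \<le> g x"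
  shows "\<exists>C>0. \<forall>x\<ge>0. f x \<le> g x + C"
proof -
  obtain R where R: "\<And>x. x \<ge> R \<Longrightarrow> f x \<le> g x" using ev eventually_at_top_linorder by metis
  define R' where "R' = max R 0"
  define C where "C = 1 + \<bar>f R'\<bar>"
  have "\<forall>x\<ge>0. f x \<le> g x + C"
  proof (intro allI impI)
    fix x :: real assume x: "x \<ge> 0"
    show "f x \<le> g x + C"
    proof (cases "x \<ge> R")
      case True then show ?thesis using R[of x] C_def by simp
    next
      case False
      then have "f x \<le> f R'" using mono[OF x] R'_def by simp
      then show ?thesis using gnn[OF x] C_def by simp
    qed
  qed
  moreover have "C > 0" using C_def by simp
  ultimately show ?thesis by blast
qed

lemma partC:
  fixes \<mu> \<delta> q \<epsilon> :: real
  assumes "\<mu> > 0" "\<delta> > 0" "q > 1" "\<epsilon> > 0"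
  shows "\<exists>C::real. C > 0 \<and>
        (\<forall>x y::real. x \<ge> 0 \<longrightarrow> y \<ge> 0 \<longrightarrow>
          x * y \<le> \<epsilon> * exp (q * x powr \<delta> / \<mu> powr \<delta>)
                   + \<mu> * y * (ln (1 + y)) powr (1 / \<delta>) + C)"
proof -
  have ev: "eventually (\<lambda>x. x * exp (x powr \<delta> / \<mu> powr \<delta>) \<le> \<epsilon> * exp (q * x powr \<delta> / \<mu> powr \<delta>)) at_top"
    using assms by real_asymp
  have mono: "x * exp (x powr \<delta> / \<mu> powr \<delta>) \<le> z * exp (z powr \<delta> / \<mu> powr \<delta>)"
    if "0 \<le> x" "x \<le> z" for x z
  proof -
    have "x powr \<delta> \<le> z powr \<delta>" using that assms by (intro powr_mono2) auto
    then have "x powr \<delta> / \<mu> powr \<delta> \<le> z powr \<delta> / \<mu> powr \<delta>" using assms by (intro divide_right_mono) auto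
    then show ?thesis using that by (intro mult_mono) auto
  qed
  obtain C where C: "C > 0" "\<And>x. x \<ge> 0 \<Longrightarrow> x * exp (x powr \<delta> / \<mu> powr \<delta>) \<le> \<epsilon> * exp (q * x powr \<delta> / \<mu> powr \<delta>) + C"
    using bound_from_eventually[OF ev mono] assms by fastforce
  have "\<forall>x y::real. x \<ge> 0 \<longrightarrow> y \<ge> 0 \<longrightarrow>
          x * y \<le> \<epsilon> * exp (q * x powr \<delta> / \<mu> powr \<delta>)
                   + \<mu> * y * (ln (1 + y)) powr (1 / \<delta>) + C"
  proof (intro allI impI)
    fix x y :: real assume xy: "x \<ge> 0" "y \<ge> 0"
    have p: "\<mu> * y * (ln (1 + y)) powr (1 / \<delta>) \<ge> 0" using assms xy by simp
    have e: "\<epsilon> * exp (q * x powr \<delta> / \<mu> powr \<delta>) \<ge> 0" using assms by simp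
    show "x * y \<le> \<epsilon> * exp (q * x powr \<delta> / \<mu> powr \<delta>) + \<mu> * y * (ln (1 + y)) powr (1 / \<delta>) + C"
      using coreA[OF assms(1,2) xy] C(2)[OF xy(1)] p e C(1) by linarith
  qed
  then show ?thesis using C(1) by blast
qed

lemma partD:
  fixes \<mu> \<delta> q \<epsilon> :: real
  assumes "\<mu> > 0" "\<delta> > 1" "q > 1" "\<epsilon> > 0"
  shows "\<exists>C::real. C > 0 \<and>
        (\<forall>x y::real. x \<ge> 0 \<longrightarrow> y \<ge> 0 \<longrightarrow>
          x * y \<le> \<epsilon> * exp (q * (ln (1 + x)) powr \<delta> / \<mu> powr \<delta>)
                   + y * exp (\<mu> * (ln (1 + y)) powr (1 / \<delta>)) + C)"
proof -
  have d0: "\<delta> > 0" using assms by simp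
  have ev: "eventually (\<lambda>x. x * exp ((ln (1+x)) powr \<delta> / \<mu> powr \<delta>) \<le> \<epsilon> * exp (q * (ln (1+x)) powr \<delta> / \<mu> powr \<delta>)) at_top"
    using assms by real_asymp
  have mono: "x * exp ((ln (1+x)) powr \<delta> / \<mu> powr \<delta>) \<le> z * exp ((ln (1+z)) powr \<delta> / \<mu> powr \<delta>)"
    if "0 \<le> x" "x \<le> z" for x z
  proof -
    have "ln (1+x) \<le> ln (1+z)" using that by simp
    then have "(ln (1+x)) powr \<delta> \<le> (ln (1+z)) powr \<delta>" using that assms by (intro powr_mono2) auto
    then have "(ln (1+x)) powr \<delta> / \<mu> powr \<delta> \<le> (ln (1+z)) powr \<delta> / \<mu> powr \<delta>" using assms by (intro divide_right_mono) auto
    then show ?thesis using that by (intro mult_mono) auto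
  qed
  obtain C where C: "C > 0" "\<And>x. x \<ge> 0 \<Longrightarrow> x * exp ((ln (1+x)) powr \<delta> / \<mu> powr \<delta>) \<le> \<epsilon> * exp (q * (ln (1+x)) powr \<delta> / \<mu> powr \<delta>) + C"
    using bound_from_eventually[OF ev mono] assms by fastforce
  have "\<forall>x y::real. x \<ge> 0 \<longrightarrow> y \<ge> 0 \<longrightarrow>
          x * y \<le> \<epsilon> * exp (q * (ln (1 + x)) powr \<delta> / \<mu> powr \<delta>)
                   + y * exp (\<mu> * (ln (1 + y)) powr (1 / \<delta>)) + C"
  proof (intro allI impI)
    fix x y :: real assume xy: "x \<ge> 0" "y \<ge> 0"
    have p: "y * exp (\<mu> * (ln (1 + y)) powr (1 / \<delta>)) \<ge> 0" using assms xy by simp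
    have e: "\<epsilon> * exp (q * (ln (1 + x)) powr \<delta> / \<mu> powr \<delta>) \<ge> 0" using assms by simp
    show "x * y \<le> \<epsilon> * exp (q * (ln (1 + x)) powr \<delta> / \<mu> powr \<delta>) + y * exp (\<mu> * (ln (1 + y)) powr (1 / \<delta>)) + C"
      using coreB[OF assms(1) d0 xy] C(2)[OF xy(1)] p e C(1) by linarith
  qed
  then show ?thesis using C(1) by blast
qed

lemma partE:
  fixes \<mu> x y :: real
  assumes "\<mu> > 0" "x \<ge> 0" "y \<ge> 0"
  shows "x * y \<le> \<mu> * exp (x / \<mu>) + \<mu> * y * ln (1 + y)"
proof (cases "y = 0")
  case True then show ?thesis using assms by simp
next
  case False
  then have y0: "y > 0" using assms by simp
  define s where "s = x / \<mu>"
  have "exp (s - ln y) \<ge> 1 + (s - ln y)" by (rule exp_ge_add_one_self)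
  moreover have "exp (s - ln y) = exp s / y" using y0 by (simp add: exp_diff)
  ultimately have "exp s / y \<ge> 1 + s - ln y" by simp
  then have "exp s \<ge> y * (1 + s - ln y)" using y0 by (simp add: field_simps)
  moreover have "y * ln y \<le> y * ln (1 + y)" using y0 by (intro mult_left_mono) auto
  moreover have "y * (1 + s - ln y) = y + s * y - y * ln y" by (simp add: algebra_simps)
  ultimately have "s * y \<le> exp s + y * ln (1 + y)" using y0 by linarith
  then have "\<mu> * (s * y) \<le> \<mu> * (exp s + y * ln (1 + y))" using assms by (intro mult_left_mono) auto
  moreover have "\<mu> * s = x" using assms s_def by simp
  ultimately show ?thesis using assms(1) s_def by (simp add: algebra_simps)
qed

lemma partF:
  fixes \<mu> q :: real
  assumes "\<mu> > 0" "q > 1"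
  shows "\<exists>C::real. C > 0 \<and>
        (\<forall>x y::real. x \<ge> 0 \<longrightarrow> y \<ge> 0 \<longrightarrow>
          y * exp x \<le> C * exp (q * x\<^sup>2 / \<mu>\<^sup>2) + y * exp (\<mu> * sqrt (ln (1 + y))))"
proof -
  define a where "a = (q - 1) / \<mu>\<^sup>2"
  have a0: "a > 0" using assms a_def by simp
  define C where "C = exp (1 / (4 * a))"
  have "\<forall>x y::real. x \<ge> 0 \<longrightarrow> y \<ge> 0 \<longrightarrow>
          y * exp x \<le> C * exp (q * x\<^sup>2 / \<mu>\<^sup>2) + y * exp (\<mu> * sqrt (ln (1 + y)))"
  proof (intro allI impI)
    fix x y :: real assume xy: "x \<ge> 0" "y \<ge> 0"
    have Cp: "C * exp (q * x\<^sup>2 / \<mu>\<^sup>2) \<ge> 0" using C_def by simp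
    show "y * exp x \<le> C * exp (q * x\<^sup>2 / \<mu>\<^sup>2) + y * exp (\<mu> * sqrt (ln (1 + y)))"
    proof (cases "x \<le> \<mu> * sqrt (ln (1 + y))")
      case True
      then have "y * exp x \<le> y * exp (\<mu> * sqrt (ln (1 + y)))" using xy by (intro mult_left_mono) auto
      then show ?thesis using Cp by linarith
    next
      case False
      have sq: "sqrt (ln (1 + y)) \<ge> 0" using xy by simp
      have "sqrt (ln (1 + y)) < x / \<mu>" using False assms by (simp add: field_simps)
      then have "(sqrt (ln (1 + y)))\<^sup>2 < (x / \<mu>)\<^sup>2" using sq by (intro power_strict_mono) auto
      then have "ln (1 + y) < x\<^sup>2 / \<mu>\<^sup>2" using xy by (simp add: power_divide)
      then have "exp (ln (1 + y)) < exp (x\<^sup>2 / \<mu>\<^sup>2)" by simp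
      then have "1 + y < exp (x\<^sup>2 / \<mu>\<^sup>2)" using xy by simp
      then have "y * exp x \<le> exp (x\<^sup>2 / \<mu>\<^sup>2) * exp x" by (intro mult_right_mono) auto
      also have "\<dots> = exp (x\<^sup>2 / \<mu>\<^sup>2 + x)" by (simp add: exp_add)
      also have "\<dots> \<le> exp (1 / (4 * a) + q * x\<^sup>2 / \<mu>\<^sup>2)"
      proof -
        have "0 \<le> (2 * a * x - 1)\<^sup>2 / (4 * a)" using a0 by simp
        also have "(2 * a * x - 1)\<^sup>2 / (4 * a) = a * x\<^sup>2 - x + 1 / (4 * a)"
          using a0 by (simp add: field_simps power2_eq_square)
        finally have "x \<le> a * x\<^sup>2 + 1 / (4 * a)" by simp
        moreover have "a * x\<^sup>2 = q * x\<^sup>2 / \<mu>\<^sup>2 - x\<^sup>2 / \<mu>\<^sup>2" using a_def by (simp add: diff_divide_distrib[symmetric] algebra_simps)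
        ultimately have "x\<^sup>2 / \<mu>\<^sup>2 + x \<le> 1 / (4 * a) + q * x\<^sup>2 / \<mu>\<^sup>2" by linarith
        then show ?thesis by simp
      qed
      also have "\<dots> = C * exp (q * x\<^sup>2 / \<mu>\<^sup>2)" by (simp add: C_def exp_add)
      moreover have "y * exp (\<mu> * sqrt (ln (1 + y))) \<ge> 0" using xy by simp
      ultimately show ?thesis by linarith
    qed
  qed
  moreover have "C > 0" using C_def by simp
  ultimately show ?thesis by blast
qed

lemma partG:
  fixes \<mu> \<delta> x y :: real
  assumes "\<mu> > 0" "\<delta> > 1" "x \<ge> 0" "y \<ge> 0"
  shows "x * y \<le> \<mu> * x powr \<delta> + \<mu> powr (- (1 / (\<delta> - 1))) * y powr (\<delta> / (\<delta> - 1))"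
proof -
  define p' where "p' = \<delta> / (\<delta> - 1)"
  define k where "k = \<mu> * \<delta>"
  have k0: "k > 0" using assms k_def by simp
  have p'1: "p' > 1" using assms p'_def by (simp add: less_divide_eq)
  have conj: "1 / \<delta> + 1 / p' = 1"
  proof -
    have "1 / p' = (\<delta> - 1) / \<delta>" by (simp add: p'_def)
    moreover have "1 / \<delta> + (\<delta> - 1) / \<delta> = 1" using assms by (simp add: add_divide_distrib[symmetric])
    ultimately show ?thesis by simp
  qed
  define a where "a = x * k powr (1 / \<delta>)"
  define b where "b = y * k powr (- (1 / \<delta>))"
  have ab: "a * b = x * y" using k0 by (simp add: a_def b_def powr_minus field_simps)
  have "a * b \<le> a powr \<delta> / \<delta> + b powr p' / p'"
    by (rule Youngs_inequality[OF assms(2) p'1 conj]) (use assms k0 in \<open>auto simp: a_def b_def\<close>)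
  moreover have "a powr \<delta> / \<delta> = \<mu> * x powr \<delta>"
    using assms k0 by (simp add: a_def powr_mult powr_powr k_def)
  moreover have "b powr p' = y powr p' * k powr (- (1 / (\<delta> - 1)))"
    using assms k0 by (simp add: b_def powr_mult powr_powr p'_def field_simps)
  moreover have "k powr (- (1 / (\<delta> - 1))) / p' \<le> \<mu> powr (- (1 / (\<delta> - 1)))"
  proof -
    have "k powr (- (1 / (\<delta> - 1))) = \<mu> powr (- (1 / (\<delta> - 1))) * \<delta> powr (- (1 / (\<delta> - 1)))"
      using assms by (simp add: k_def powr_mult)
    moreover have "\<delta> powr (- (1 / (\<delta> - 1))) \<le> 1"
    proof -
      have "\<delta> powr (1 / (\<delta> - 1)) \<ge> 1" using assms by (intro ge_one_powr_ge_zero) auto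
      then show ?thesis by (simp add: powr_minus inverse_le_1_iff)
    qed
    moreover have "1 / p' \<le> 1" using p'1 by simp
    moreover have "\<mu> powr (- (1 / (\<delta> - 1))) \<ge> 0" by simp
    moreover have "\<delta> powr (- (1 / (\<delta> - 1))) \<ge> 0" by simp
    ultimately have h1: "k powr (- (1 / (\<delta> - 1))) \<le> \<mu> powr (- (1 / (\<delta> - 1))) * 1"
      by (metis mult_left_mono)
    have "k powr (- (1 / (\<delta> - 1))) * (1 / p') \<le> k powr (- (1 / (\<delta> - 1))) * 1"
      using \<open>1 / p' \<le> 1\<close> by (intro mult_left_mono) auto
    with h1 have "k powr (- (1 / (\<delta> - 1))) * (1 / p') \<le> \<mu> powr (- (1 / (\<delta> - 1)))" by simp
    then show ?thesis by simp
  qed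
  ultimately have "x * y \<le> \<mu> * x powr \<delta> + y powr p' * (k powr (- (1 / (\<delta> - 1))) / p')"
    using ab by simp
  also have "\<dots> \<le> \<mu> * x powr \<delta> + y powr p' * \<mu> powr (- (1 / (\<delta> - 1)))"
    using \<open>k powr _ / p' \<le> _\<close> by (intro add_left_mono mult_left_mono) auto
  finally show ?thesis by (simp add: p'_def mult.commute)
qed

theorem proposition4p1:
  fixes \<mu> \<delta> :: real
  assumes "\<mu> > 0" and "\<delta> > 0"
  shows
    "(\<forall>x y::real. x \<ge> 0 \<longrightarrow> y \<ge> 0 \<longrightarrow>
        x * y \<le> x * exp (x powr \<delta> / \<mu> powr \<delta>) + \<mu> * y * (ln (1 + y)) powr (1 / \<delta>))
   \<and> (\<forall>x y::real. x \<ge> 0 \<longrightarrow> y \<ge> 0 \<longrightarrow>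
        x * y \<le> x * exp ((ln (1 + x)) powr \<delta> / \<mu> powr \<delta>)
                 + y * exp (\<mu> * (ln (1 + y)) powr (1 / \<delta>)))
   \<and> (\<forall>q \<epsilon>::real. q > 1 \<longrightarrow> \<epsilon> > 0 \<longrightarrow> (\<exists>C::real. C > 0 \<and>
        (\<forall>x y::real. x \<ge> 0 \<longrightarrow> y \<ge> 0 \<longrightarrow>
          x * y \<le> \<epsilon> * exp (q * x powr \<delta> / \<mu> powr \<delta>)
                   + \<mu> * y * (ln (1 + y)) powr (1 / \<delta>) + C)))
   \<and> (\<delta> > 1 \<longrightarrow> (\<forall>q \<epsilon>::real. q > 1 \<longrightarrow> \<epsilon> > 0 \<longrightarrow> (\<exists>C::real. C > 0 \<and>
        (\<forall>x y::real. x \<ge> 0 \<longrightarrow> y \<ge> 0 \<longrightarrow>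
          x * y \<le> \<epsilon> * exp (q * (ln (1 + x)) powr \<delta> / \<mu> powr \<delta>)
                   + y * exp (\<mu> * (ln (1 + y)) powr (1 / \<delta>)) + C))))
   \<and> (\<forall>x y::real. x \<ge> 0 \<longrightarrow> y \<ge> 0 \<longrightarrow>
        x * y \<le> \<mu> * exp (x / \<mu>) + \<mu> * y * ln (1 + y))
   \<and> (\<forall>q::real. q > 1 \<longrightarrow> (\<exists>C::real. C > 0 \<and>
        (\<forall>x y::real. x \<ge> 0 \<longrightarrow> y \<ge> 0 \<longrightarrow>
          y * exp x \<le> C * exp (q * x\<^sup>2 / \<mu>\<^sup>2) + y * exp (\<mu> * sqrt (ln (1 + y))))))
   \<and> (\<delta> > 1 \<longrightarrow> (\<forall>x y::real. x \<ge> 0 \<longrightarrow> y \<ge> 0 \<longrightarrow>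
        x * y \<le> \<mu> * x powr \<delta> + \<mu> powr (- (1 / (\<delta> - 1))) * y powr (\<delta> / (\<delta> - 1))))"
proof (intro conjI allI impI)
  fix x y :: real assume "x \<ge> 0" "y \<ge> 0"
  then show "x * y \<le> x * exp (x powr \<delta> / \<mu> powr \<delta>) + \<mu> * y * (ln (1 + y)) powr (1 / \<delta>)"
    by (rule partA[OF assms])
next
  fix x y :: real assume "x \<ge> 0" "y \<ge> 0"
  then show "x * y \<le> x * exp ((ln (1 + x)) powr \<delta> / \<mu> powr \<delta>) + y * exp (\<mu> * (ln (1 + y)) powr (1 / \<delta>))"
    by (rule partB[OF assms])
next
  fix q \<epsilon> :: real assume "q > 1" "\<epsilon> > 0"
  then show "\<exists>C::real. C > 0 \<and>
        (\<forall>x y::real. x \<ge> 0 \<longrightarrow> y \<ge> 0 \<longrightarrow>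
          x * y \<le> \<epsilon> * exp (q * x powr \<delta> / \<mu> powr \<delta>)
                   + \<mu> * y * (ln (1 + y)) powr (1 / \<delta>) + C)"
    by (rule partC[OF assms])
next
  fix q \<epsilon> :: real assume "\<delta> > 1" "q > 1" "\<epsilon> > 0"
  then show "\<exists>C::real. C > 0 \<and>
        (\<forall>x y::real. x \<ge> 0 \<longrightarrow> y \<ge> 0 \<longrightarrow>
          x * y \<le> \<epsilon> * exp (q * (ln (1 + x)) powr \<delta> / \<mu> powr \<delta>)
                   + y * exp (\<mu> * (ln (1 + y)) powr (1 / \<delta>)) + C)"
    by (rule partD[OF assms(1)])
next
  fix x y :: real assume "x \<ge> 0" "y \<ge> 0"
  then show "x * y \<le> \<mu> * exp (x / \<mu>) + \<mu> * y * ln (1 + y)"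
    by (rule partE[OF assms(1)])
next
  fix q :: real assume "q > 1"
  then show "\<exists>C::real. C > 0 \<and>
        (\<forall>x y::real. x \<ge> 0 \<longrightarrow> y \<ge> 0 \<longrightarrow>
          y * exp x \<le> C * exp (q * x\<^sup>2 / \<mu>\<^sup>2) + y * exp (\<mu> * sqrt (ln (1 + y))))"
    by (rule partF[OF assms(1)])
next
  fix x y :: real assume "\<delta> > 1" "x \<ge> 0" "y \<ge> 0"
  then show "x * y \<le> \<mu> * x powr \<delta> + \<mu> powr (- (1 / (\<delta> - 1))) * y powr (\<delta> / (\<delta> - 1))"
    by (rule partG[OF assms(1)])
qed

end
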